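(* Let $M=(E,\mathcal{I})$ be a matroid, $m,\Delta$ positive integers, $W:E\to\{-\Delta,\dots,\Delta\}^m$ weight vectors and $\mu\ge0$. Let $A,B\in\mathcal{I}$ be disjoint with $|A|=|B|=k$ and $\|W(A)-W(B)\|_1\le\mu$, and let $d\in\mathbb{Z}^m$. Then there exist unicolor sets $A'\subseteq A$, $B'\subseteq B$ of equal cardinality such that (i) $(A\setminus A')\cup B'\in\mathcal{I}$, (ii) $|A'|=|B'|\ge\dfrac{k-\|d\|_1\mu}{(2\|d\|_1\Delta+1)^2(2\Delta+1)^{2m}}$, and (iii) $d^{\mathsf T}W(a)\ge d^{\mathsf T}W(b)$ for each $a\in A'$ and $b\in B'$.
   Context: $W(S)=\sum_{e\in S}W(e)$. A set $S\subseteq E$ is unicolor if $W(a)=W(b)$ for all $a,b\in S$. *)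

theory Defs
  imports Complex_Main
begin

definition matroid :: "'e set \<Rightarrow> ('e set \<Rightarrow> bool) \<Rightarrow> bool" where
  "matroid E indep \<longleftrightarrow>
     finite E \<and>
     (\<forall>X. indep X \<longrightarrow> X \<subseteq> E) \<and>
     indep {} \<and>
     (\<forall>X Y. indep X \<longrightarrow> Y \<subseteq> X \<longrightarrow> indep Y) \<and>
     (\<forall>X Y. indep X \<longrightarrow> indep Y \<longrightarrow> card X < card Y \<longrightarrow>
        (\<exists>y\<in>Y - X. indep (insert y X)))"

text \<open>Weight vectors in Z^m are represented as functions nat => int, only indices i < m matter.\<close>
definition wsum :: "('e \<Rightarrow> nat \<Rightarrow> int) \<Rightarrow> 'e set \<Rightarrow> nat \<Rightarrow> int" where
  "wsum W S = (\<lambda>i. \<Sum>e\<in>S. W e i)"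

definition norm1 :: "nat \<Rightarrow> (nat \<Rightarrow> int) \<Rightarrow> int" where
  "norm1 m v = (\<Sum>i<m. \<bar>v i\<bar>)"

definition dotp :: "nat \<Rightarrow> (nat \<Rightarrow> int) \<Rightarrow> (nat \<Rightarrow> int) \<Rightarrow> int" where
  "dotp m u v = (\<Sum>i<m. u i * v i)"

definition unicolor :: "nat \<Rightarrow> ('e \<Rightarrow> nat \<Rightarrow> int) \<Rightarrow> 'e set \<Rightarrow> bool" where
  "unicolor m W S \<longleftrightarrow> (\<forall>a\<in>S. \<forall>b\<in>S. \<forall>i<m. W a i = W b i)"

end

theory Submission
  imports Defs
begin


lemma matroid_fin: "matroid E indep \<Longrightarrow> indep X \<Longrightarrow> finite X"
  unfolding matroid_def by (meson finite_subset)

lemma matroid_aug: assumes "matroid E indep" "indep X" "indep Y" "card X < card Y"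
  shows "\<exists>y\<in>Y-X. indep (insert y X)"
proof -
  have h: "\<forall>X Y. indep X \<longrightarrow> indep Y \<longrightarrow> card X < card Y \<longrightarrow> (\<exists>y\<in>Y - X. indep (insert y X))"
    using assms(1) unfolding matroid_def by (elim conjE) assumption
  show ?thesis using h assms(2-4) by simp
qed

lemma matroid_sub: assumes "matroid E indep" "indep X" "Y \<subseteq> X" shows "indep Y"
proof -
  have h: "\<forall>X Y. indep X \<longrightarrow> Y \<subseteq> X \<longrightarrow> indep Y"
    using assms(1) unfolding matroid_def by (elim conjE) assumption
  show ?thesis using h assms(2-3) by simp
qed

lemma matroid_E: "matroid E indep \<Longrightarrow> indep X \<Longrightarrow> X \<subseteq> E"
  unfolding matroid_def by simp

lemma aug:
  assumes M: "matroid E indep"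
  shows "indep X \<Longrightarrow> indep Y \<Longrightarrow> card Y \<le> card X \<Longrightarrow>
    \<exists>Z. Z \<subseteq> X - Y \<and> indep (Y \<union> Z) \<and> card (Y \<union> Z) = card X"
proof (induction "card X - card Y" arbitrary: Y)
  case 0
  then show ?case by (intro exI[of _ "{}"]) auto
next
  case (Suc n)
  have fin: "finite Y" "finite X" using M Suc.prems matroid_fin by blast+
  have "card Y < card X" using Suc by linarith
  then obtain y where y: "y \<in> X - Y" "indep (insert y Y)" using matroid_aug[OF M Suc.prems(2,1)] by blast
  have cy: "card (insert y Y) = card Y + 1" using y fin by simp
  have "n = card X - card (insert y Y)" using Suc.hyps cy by linarith
  moreover have "card (insert y Y) \<le> card X" using cy \<open>card Y < card X\<close> by linarith
  ultimately obtain Z where Z: "Z \<subseteq> X - insert y Y" "indep (insert y Y \<union> Z)" "card (insert y Y \<union> Z) = card X"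
    using Suc.hyps(1)[of "insert y Y"] Suc.prems y by blast
  show ?case using Z y by (intro exI[of _ "insert y Z"]) auto
qed

lemma pigeon:
  assumes "finite S" "g ` S \<subseteq> T" "finite T" "card T \<le> N"
  shows "\<exists>c. card S \<le> N * card {x\<in>S. g x = c}"
proof (rule ccontr)
  assume H: "\<not> ?thesis"
  have lt: "\<And>c. N * card {x\<in>S. g x = c} < card S" using H by (simp add: not_le)
  have S: "(\<Union>c\<in>g`S. {x\<in>S. g x = c}) = S" by blast
  have "card (\<Union>c\<in>g`S. {x\<in>S. g x = c}) = (\<Sum>c\<in>g`S. card {x\<in>S. g x = c})"
    by (rule card_UN_disjoint) (use assms(1) in auto)
  hence cs: "card S = (\<Sum>c\<in>g`S. card {x\<in>S. g x = c})" by (simp only: S)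
  have ne: "g ` S \<noteq> {}" using lt[of undefined] by auto
  have "N * card S = (\<Sum>c\<in>g`S. N * card {x\<in>S. g x = c})" unfolding cs by (rule sum_distrib_left)
  also have "\<dots> < (\<Sum>c\<in>g`S. card S)"
    by (rule sum_strict_mono) (use assms(1) ne lt in auto)
  also have "\<dots> = card (g`S) * card S" by simp
  also have "\<dots> \<le> N * card S" using card_mono[OF assms(3,2)] assms(4) by (intro mult_right_mono) auto
  finally show False by simp
qed


lemma shrinkA:
  assumes M: "matroid E indep" and iA: "indep A" and dj: "A \<inter> B = {}" and cAB: "card A = card B"
    and fB: "finite B"
    and P: "P \<subseteq> A" "Q \<subseteq> B" "card P = card Q" "indep ((A - P) \<union> Q)" and S: "S \<subseteq> P"
  shows "\<exists>T\<subseteq>Q. card T = card S \<and> indep ((A - S) \<union> T)"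
proof -
  have fA: "finite A" using M iA matroid_fin by blast
  have fP: "finite P" "finite Q" "finite S" using finite_subset[OF P(1) fA] finite_subset[OF P(2) fB] finite_subset[OF S finite_subset[OF P(1) fA]] by auto
  have "card ((A-P) \<union> Q) = card (A - P) + card Q"
    by (rule card_Un_disjoint) (use fA fP P dj in auto)
  also have "card (A - P) = card A - card P" using fP P by (simp add: card_Diff_subset)
  finally have cX: "card ((A-P) \<union> Q) = card A" using P card_mono[OF fA P(1)] by simp
  have iY: "indep (A - S)" using matroid_sub[OF M iA] by blast
  have "card (A - S) \<le> card ((A-P) \<union> Q)" using cX card_mono[OF fA] by simp
  then obtain Z where Z: "Z \<subseteq> ((A-P)\<union>Q) - (A-S)" "indep ((A-S) \<union> Z)"
     "card ((A-S)\<union>Z) = card ((A-P)\<union>Q)"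
    using aug[OF M P(4) iY] by blast
  have ZQ: "Z \<subseteq> Q" using Z(1) S by blast
  have fZ: "finite Z" using finite_subset[OF ZQ fP(2)] .
  have "card ((A-S)\<union>Z) = card (A - S) + card Z"
    by (rule card_Un_disjoint) (use fA fZ ZQ P dj in auto)
  also have "card (A - S) = card A - card S" using fP P S by (simp add: card_Diff_subset)
  finally have "card Z = card S" using Z(3) cX card_mono[OF fA order.trans[OF S P(1)]] by simp
  then show ?thesis using ZQ Z(2) by blast
qed

lemma shrinkB:
  assumes M: "matroid E indep" and iA: "indep A" and dj: "A \<inter> B = {}" and cAB: "card A = card B"
    and fB: "finite B"
    and P: "P \<subseteq> A" "Q \<subseteq> B" "card P = card Q" "indep ((A - P) \<union> Q)" and T: "T \<subseteq> Q"
  shows "\<exists>S\<subseteq>P. card S = card T \<and> indep ((A - S) \<union> T)"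
proof -
  have fA: "finite A" using M iA matroid_fin by blast
  have fP: "finite P" "finite Q" "finite T" using finite_subset[OF P(1) fA] finite_subset[OF P(2) fB] finite_subset[OF T finite_subset[OF P(2) fB]] by auto
  have cY: "card ((A-P) \<union> T) = card (A - P) + card T"
    by (rule card_Un_disjoint) (use fA fP P T dj in auto)
  have cAP: "card (A - P) = card A - card P" using fP P by (simp add: card_Diff_subset)
  have cT: "card T \<le> card P" using card_mono[OF fP(2) T] P by simp
  have cPA: "card P \<le> card A" using card_mono[OF fA P(1)] .
  have iY: "indep ((A-P) \<union> T)" by (rule matroid_sub[OF M P(4)]) (use T in auto)
  have "card ((A-P) \<union> T) \<le> card A" using cY cAP cT cPA by linarith
  then obtain Z where Z: "Z \<subseteq> A - ((A-P)\<union>T)" "indep (((A-P)\<union>T) \<union> Z)"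
     "card (((A-P)\<union>T) \<union> Z) = card A"
    using aug[OF M iA iY] by blast
  have ZP: "Z \<subseteq> P" using Z(1) by blast
  have fZ: "finite Z" using finite_subset[OF ZP fP(1)] .
  have "card (((A-P)\<union>T) \<union> Z) = card ((A-P)\<union>T) + card Z"
    by (rule card_Un_disjoint) (use fA fZ fP Z(1) in auto)
  hence cZ: "card Z = card P - card T" using Z(3) cY cAP cT cPA by simp
  have cS: "card (P - Z) = card T" using cZ cT card_Diff_subset[OF fZ ZP] by linarith
  have "(A - (P - Z)) \<union> T = ((A-P)\<union>T) \<union> Z" using ZP P by blast
  then show ?thesis using cS Z(2) by (intro exI[of _ "P - Z"]) auto
qed



lemma dot_bound:
  assumes "\<And>i. i < m \<Longrightarrow> \<bar>w i\<bar> \<le> c"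
  shows "\<bar>dotp m d w\<bar> \<le> norm1 m d * c"
proof -
  have "\<bar>dotp m d w\<bar> \<le> (\<Sum>i<m. \<bar>d i * w i\<bar>)" unfolding dotp_def by (rule sum_abs)
  also have "\<dots> \<le> (\<Sum>i<m. \<bar>d i\<bar> * c)"
    by (rule sum_mono) (use assms in \<open>auto simp: abs_mult intro: mult_left_mono\<close>)
  also have "\<dots> = norm1 m d * c" unfolding norm1_def by (simp add: sum_distrib_right)
  finally show ?thesis .
qed

lemma abs_le_norm1: "i < m \<Longrightarrow> \<bar>v i\<bar> \<le> norm1 m v"
  unfolding norm1_def by (rule member_le_sum) auto

lemma dot_diff: "(\<Sum>a\<in>A. dotp m d (W a)) - (\<Sum>b\<in>B. dotp m d (W b)) = dotp m d (\<lambda>i. wsum W A i - wsum W B i)"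
  unfolding dotp_def wsum_def
  by (simp add: sum.swap[of _ A] sum.swap[of _ B] sum_distrib_left right_diff_distrib sum_subtractf)

lemma card_ind: "finite A \<Longrightarrow> int (card {a\<in>A. P a}) = (\<Sum>a\<in>A. if P a then 1 else 0)"
proof -
  assume "finite A"
  moreover have "{a\<in>A. P a} = A \<inter> Collect P" by auto
  ultimately show ?thesis by (simp add: sum.If_cases)
qed

lemma thresh_sum:
  fixes f :: "'e \<Rightarrow> int"
  assumes fA: "finite A" and fB: "finite B" and D: "D \<ge> 0"
    and bA: "\<And>x. x \<in> A \<Longrightarrow> -D \<le> f x \<and> f x \<le> D"
    and bB: "\<And>x. x \<in> B \<Longrightarrow> -D \<le> f x \<and> f x \<le> D"
  shows "(\<Sum>t\<in>{-D..D}. int (card {a\<in>A. t \<le> f a}) - int (card {b\<in>B. t < f b}))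
     = (\<Sum>a\<in>A. f a) - (\<Sum>b\<in>B. f b) + (D+1) * card A - D * card B"
proof -
  have 1: "(\<Sum>t\<in>{-D..D}. int (card {a\<in>A. t \<le> f a})) = (\<Sum>a\<in>A. f a + D + 1)"
  proof -
    have "(\<Sum>t\<in>{-D..D}. int (card {a\<in>A. t \<le> f a})) = (\<Sum>t\<in>{-D..D}. \<Sum>a\<in>A. if t \<le> f a then 1 else 0)"
      using fA by (simp add: card_ind)
    also have "\<dots> = (\<Sum>a\<in>A. \<Sum>t\<in>{-D..D}. if t \<le> f a then 1 else 0)" by (rule sum.swap)
    also have "\<dots> = (\<Sum>a\<in>A. f a + D + 1)"
    proof (rule sum.cong)
      fix a assume a: "a \<in> A"
      have "(\<Sum>t\<in>{-D..D}. if t \<le> f a then 1 else 0) = int (card {t\<in>{-D..D}. t \<le> f a})"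
        by (rule card_ind[symmetric]) simp
      also have "{t\<in>{-D..D}. t \<le> f a} = {-D..f a}" using bA[OF a] by auto
      finally show "(\<Sum>t\<in>{-D..D}. if t \<le> f a then (1::int) else 0) = f a + D + 1" using bA[OF a] by simp
    qed simp
    finally show ?thesis .
  qed
  have 2: "(\<Sum>t\<in>{-D..D}. int (card {b\<in>B. t < f b})) = (\<Sum>b\<in>B. f b + D)"
  proof -
    have "(\<Sum>t\<in>{-D..D}. int (card {b\<in>B. t < f b})) = (\<Sum>t\<in>{-D..D}. \<Sum>b\<in>B. if t < f b then 1 else 0)"
      using fB by (simp add: card_ind)
    also have "\<dots> = (\<Sum>b\<in>B. \<Sum>t\<in>{-D..D}. if t < f b then 1 else 0)" by (rule sum.swap)
    also have "\<dots> = (\<Sum>b\<in>B. f b + D)"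
    proof (rule sum.cong)
      fix b assume b: "b \<in> B"
      have "(\<Sum>t\<in>{-D..D}. if t < f b then 1 else 0) = int (card {t\<in>{-D..D}. t < f b})"
        by (rule card_ind[symmetric]) simp
      also have "{t\<in>{-D..D}. t < f b} = {-D..<f b}" using bB[OF b] by auto
      finally show "(\<Sum>t\<in>{-D..D}. if t < f b then (1::int) else 0) = f b + D" using bB[OF b] by simp
    qed simp
    finally show ?thesis .
  qed
  show ?thesis unfolding sum_subtractf 1 2 by (simp add: sum.distrib algebra_simps)
qed

lemma thresh_exists:
  fixes g :: "int \<Rightarrow> int"
  assumes "D \<ge> 0" "(\<Sum>t\<in>{-D..D}. g t) = R"
  shows "\<exists>t\<in>{-D..D}. (2*D+1) * g t \<ge> R"
proof (rule ccontr)
  assume "\<not> ?thesis"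
  hence lt: "\<And>t. t \<in> {-D..D} \<Longrightarrow> (2*D+1) * g t < R" by (meson not_le)
  have ne: "{-D..D} \<noteq> {}" using assms by auto
  have "(2*D+1) * R = (\<Sum>t\<in>{-D..D}. (2*D+1) * g t)" unfolding assms(2)[symmetric] by (rule sum_distrib_left)
  also have "\<dots> < (\<Sum>t\<in>{-D..D}. R)" by (rule sum_strict_mono) (use ne lt in auto)
  also have "\<dots> = (2*D+1) * R" using assms(1) by simp
  finally show False by simp
qed


theorem lemma12:
  fixes E :: "'e set" and indep :: "'e set \<Rightarrow> bool"
    and m :: nat and \<Delta> :: int and W :: "'e \<Rightarrow> nat \<Rightarrow> int" and \<mu> :: real
    and A B :: "'e set" and k :: nat and d :: "nat \<Rightarrow> int"
  assumes "matroid E indep"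
    and "m > 0" and "\<Delta> > 0"
    and "\<And>e i. e \<in> E \<Longrightarrow> i < m \<Longrightarrow> - \<Delta> \<le> W e i \<and> W e i \<le> \<Delta>"
    and "\<mu> \<ge> 0"
    and "indep A" and "indep B" and "A \<inter> B = {}"
    and "card A = k" and "card B = k"
    and "real_of_int (norm1 m (\<lambda>i. wsum W A i - wsum W B i)) \<le> \<mu>"
  shows "\<exists>A' B'. A' \<subseteq> A \<and> B' \<subseteq> B \<and> unicolor m W A' \<and> unicolor m W B' \<and>
           card A' = card B' \<and>
           indep ((A - A') \<union> B') \<and>
           real (card A') \<ge> (real k - real_of_int (norm1 m d) * \<mu>) /
              (real_of_int ((2 * norm1 m d * \<Delta> + 1)^2 * (2 * \<Delta> + 1)^(2*m))) \<and>
           (\<forall>a\<in>A'. \<forall>b\<in>B'. dotp m d (W a) \<ge> dotp m d (W b))"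
proof -
  note M = assms(1)
  note iA = assms(6) and iB = assms(7) and dj = assms(8)
  have fA: "finite A" using matroid_fin[OF M iA] .
  have fB: "finite B" using matroid_fin[OF M iB] .
  have AE: "A \<subseteq> E" using matroid_E[OF M iA] .
  have BE: "B \<subseteq> E" using matroid_E[OF M iB] .
  have cAB: "card A = card B" using assms(9,10) by simp
  define f where "f e = dotp m d (W e)" for e
  define nd where "nd = norm1 m d"
  define D where "D = nd * \<Delta>"
  have nd0: "nd \<ge> 0" unfolding nd_def norm1_def by (rule sum_nonneg) auto
  have D0: "D \<ge> 0" unfolding D_def using nd0 assms(3) by simp
  have fbd: "-D \<le> f e \<and> f e \<le> D" if "e \<in> E" for e
  proof -
    have "\<bar>f e\<bar> \<le> nd * \<Delta>" unfolding f_def nd_def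
      by (rule dot_bound) (use assms(4) that in \<open>force simp: abs_le_iff\<close>)
    then show ?thesis unfolding D_def by auto
  qed
  have diff: "(\<Sum>a\<in>A. f a) - (\<Sum>b\<in>B. f b) \<ge> - (real_of_int nd * \<mu>)"
  proof -
    have "\<bar>(\<Sum>a\<in>A. f a) - (\<Sum>b\<in>B. f b)\<bar> \<le> nd * norm1 m (\<lambda>i. wsum W A i - wsum W B i)"
      unfolding f_def dot_diff nd_def by (rule dot_bound) (rule abs_le_norm1)
    hence "real_of_int \<bar>(\<Sum>a\<in>A. f a) - (\<Sum>b\<in>B. f b)\<bar> \<le> real_of_int nd * real_of_int (norm1 m (\<lambda>i. wsum W A i - wsum W B i))"
      by (metis of_int_le_iff of_int_mult)
    also have "\<dots> \<le> real_of_int nd * \<mu>" using assms(11) nd0 by (intro mult_left_mono) auto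
    finally show ?thesis by linarith
  qed
  define cnt where "cnt t = int (card {a\<in>A. t \<le> f a}) - int (card {b\<in>B. t < f b})" for t
  define R where "R = (\<Sum>a\<in>A. f a) - (\<Sum>b\<in>B. f b) + int k"
  have "(\<Sum>t\<in>{-D..D}. cnt t) = R"
    unfolding cnt_def R_def
    by (subst thresh_sum[OF fA fB D0]) (use fbd AE BE assms(9,10) in \<open>auto simp: algebra_simps\<close>)
  then obtain t where t: "(2*D+1) * cnt t \<ge> R" using thresh_exists[OF D0] by blast
  have Rk: "real_of_int R \<ge> real k - real_of_int nd * \<mu>" unfolding R_def using diff by simp
  define B1 where "B1 = {b\<in>B. f b \<le> t}"
  have B1B: "B1 \<subseteq> B" unfolding B1_def by auto
  have i0: "indep ((A - A) \<union> B)" using iB by simp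
  obtain S1 where S1: "S1 \<subseteq> A" "card S1 = card B1" "indep ((A - S1) \<union> B1)"
    using shrinkB[OF M iA dj cAB fB order.refl order.refl cAB i0 B1B] by blast
  define S2 where "S2 = {a\<in>S1. t \<le> f a}"
  have S2S1: "S2 \<subseteq> S1" unfolding S2_def by auto
  have cS2: "int (card S2) \<ge> cnt t"
  proof -
    have "S1 \<subseteq> S2 \<union> (A - {a\<in>A. t \<le> f a})" using S1(1) unfolding S2_def by auto
    hence "card S1 \<le> card (S2 \<union> (A - {a\<in>A. t \<le> f a}))" using finite_subset[OF S1(1) fA] fA unfolding S2_def by (intro card_mono) auto
    also have "\<dots> \<le> card S2 + card (A - {a\<in>A. t \<le> f a})" by (rule card_Un_le)
    also have "card (A - {a\<in>A. t \<le> f a}) = card A - card {a\<in>A. t \<le> f a}"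
      using fA by (intro card_Diff_subset) auto
    finally have 1: "card S1 \<le> card S2 + (card A - card {a\<in>A. t \<le> f a})" .
    have 2: "card {a\<in>A. t \<le> f a} \<le> card A" using fA by (intro card_mono) auto
    have "card B = card (B1 \<union> {b\<in>B. t < f b})" unfolding B1_def by (rule arg_cong[of _ _ card]) auto
    also have "\<dots> = card B1 + card {b\<in>B. t < f b}" using fB unfolding B1_def
      by (intro card_Un_disjoint) auto
    finally have 3: "card B = card B1 + card {b\<in>B. t < f b}" .
    show ?thesis unfolding cnt_def using 1 2 3 S1(2) cAB by linarith
  qed
  obtain T2 where T2: "T2 \<subseteq> B1" "card T2 = card S2" "indep ((A - S2) \<union> T2)"
    using shrinkA[OF M iA dj cAB fB S1(1) B1B S1(2) S1(3) S2S1] by blast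
  define col where "col e = map (W e) [0..<m]" for e
  define Cols where "Cols = {xs. set xs \<subseteq> {-\<Delta>..\<Delta>} \<and> length xs = m}"
  define N where "N = nat (2*\<Delta>+1) ^ m"
  have fC: "finite Cols" unfolding Cols_def by (rule finite_lists_length_eq) simp
  have cC: "card Cols \<le> N" unfolding Cols_def N_def by (subst card_lists_length_eq) auto
  have colE: "col ` X \<subseteq> Cols" if "X \<subseteq> E" for X
    unfolding col_def Cols_def using assms(4) that by (auto 4 3)
  have N0: "N > 0" unfolding N_def using assms(3) by simp
  have uni: "unicolor m W X" if "\<forall>x\<in>X. col x = c" for X c
    unfolding unicolor_def
  proof (intro ballI allI impI)
    fix a b i assume "a \<in> X" "b \<in> X" "i < m"
    hence "col a ! i = col b ! i" using that by simp
    thus "W a i = W b i" using \<open>i < m\<close> unfolding col_def by simp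
  qed
  have fS2: "finite S2" using finite_subset[OF order.trans[OF S2S1 S1(1)] fA] .
  obtain c1 where c1: "card S2 \<le> N * card {x\<in>S2. col x = c1}"
    using pigeon[OF fS2 colE fC cC] S2S1 S1(1) AE by blast
  define S3 where "S3 = {x\<in>S2. col x = c1}"
  have S3S2: "S3 \<subseteq> S2" unfolding S3_def by auto
  have T2B: "T2 \<subseteq> B" using T2(1) B1B by blast
  have S2A: "S2 \<subseteq> A" using S2S1 S1(1) by blast
  obtain T3 where T3: "T3 \<subseteq> T2" "card T3 = card S3" "indep ((A - S3) \<union> T3)"
    using shrinkA[OF M iA dj cAB fB S2A T2B T2(2)[symmetric] T2(3) S3S2] by blast
  have fT3: "finite T3" using finite_subset[OF order.trans[OF T3(1) T2B] fB] .
  obtain c2 where c2: "card T3 \<le> N * card {x\<in>T3. col x = c2}"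
    using pigeon[OF fT3 colE fC cC] T3(1) T2B BE by blast
  define T4 where "T4 = {x\<in>T3. col x = c2}"
  have T4T3: "T4 \<subseteq> T3" unfolding T4_def by auto
  have S3A: "S3 \<subseteq> A" using S3S2 S2A by blast
  have T3B: "T3 \<subseteq> B" using T3(1) T2B by blast
  obtain S4 where S4: "S4 \<subseteq> S3" "card S4 = card T4" "indep ((A - S4) \<union> T4)"
    using shrinkB[OF M iA dj cAB fB S3A T3B T3(2)[symmetric] T3(3) T4T3] by blast
  show ?thesis
  proof (intro exI conjI)
    show "S4 \<subseteq> A" using S4(1) S3A by blast
    show "T4 \<subseteq> B" using T4T3 T3B by blast
    show "unicolor m W S4" by (rule uni[of _ c1]) (use S4(1) in \<open>auto simp: S3_def\<close>)
    show "unicolor m W T4" by (rule uni[of _ c2]) (auto simp: T4_def)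
    show "card S4 = card T4" by (rule S4(2))
    show "indep ((A - S4) \<union> T4)" by (rule S4(3))
    show "\<forall>a\<in>S4. \<forall>b\<in>T4. dotp m d (W a) \<ge> dotp m d (W b)"
    proof (intro ballI)
      fix a b assume a: "a \<in> S4" and b: "b \<in> T4"
      have "t \<le> f a" using a S4(1) S3S2 unfolding S2_def by auto
      moreover have "f b \<le> t" using b T4T3 T3(1) T2(1) unfolding B1_def by auto
      ultimately show "dotp m d (W a) \<ge> dotp m d (W b)" unfolding f_def by simp
    qed
    have key: "card S2 \<le> N^2 * card S4"
    proof -
      have "card S2 \<le> N * card S3" using c1 unfolding S3_def .
      also have "card S3 = card T3" using T3(2) by simp
      also have "N * card T3 \<le> N * (N * card T4)" using c2 unfolding T4_def by simp
      finally show ?thesis using S4(2) by (simp add: power2_eq_square)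
    qed
    define Q where "Q = (2 * nd * \<Delta> + 1)^2 * (2 * \<Delta> + 1)^(2*m)"
    have QN: "Q = (2*D+1)^2 * int N ^ 2"
      unfolding Q_def D_def N_def using assms(3) by (simp add: power_mult[symmetric] mult.commute mult.assoc)
    have Q0: "Q > 0" using QN N0 D0 by simp
    have "R \<le> (2*D+1) * int (card S2)" using t cS2 D0 by (meson order.trans mult_left_mono linorder_linear add_nonneg_nonneg zero_le_one mult_nonneg_nonneg zero_le_numeral)
    also have "\<dots> \<le> (2*D+1) * (int N^2 * int (card S4))"
      by (intro mult_left_mono) (use key in \<open>metis of_nat_le_iff of_nat_mult of_nat_power\<close>, use D0 in simp)
    also have "\<dots> \<le> (2*D+1)^2 * (int N^2 * int (card S4))" using D0
      by (intro mult_right_mono) (auto simp: power2_eq_square)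
    finally have "R \<le> Q * int (card S4)" unfolding QN by (simp add: mult.assoc)
    hence "real_of_int R \<le> real_of_int Q * real (card S4)" by (metis of_int_le_iff of_int_mult of_int_of_nat_eq)
    hence X: "real k - real_of_int nd * \<mu> \<le> real_of_int Q * real (card S4)" using Rk by linarith
    have Q0r: "real_of_int Q > 0" using Q0 by simp
    have "(real k - real_of_int nd * \<mu>) / real_of_int Q \<le> real (card S4)"
      using X Q0r by (subst pos_divide_le_eq) (auto simp: mult.commute)
    then show "(real k - real_of_int (norm1 m d) * \<mu>) /
              (real_of_int ((2 * norm1 m d * \<Delta> + 1)^2 * (2 * \<Delta> + 1)^(2*m))) \<le> real (card S4)"
      unfolding Q_def nd_def .
  qed
qed

end
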